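(* Let $\pi=N(0,\Sigma)$ on $\mathbb{R}^d$ with positive definite $\Sigma$, $Q=\Sigma^{-1}$ partitioned into blocks $(Q_{ij})_{i,j=1}^s$, and $K=\sqrt Q$ the symmetric square root. For $c\in\mathbb{R}^d$ let $f_c(x)=\exp(\langle c,Kx\rangle-\|c\|^2/2)$. For each block $i$ let $T^{(i)}=I-KD_iK$, where $D_i$ is the $d\times d$ block-diagonal matrix with $(Q_{ii})^{-1}$ in the $i$-th diagonal block and zeros elsewhere. Then for all $c\in\mathbb{R}^d$, $$(Pr_if_c)(x)=f_{T^{(i)}c}(x).$$
   Context: $Pr_i$ is the operator $(Pr_if)(x)=\int f(y_i,x_{-i})\,\pi(dy_i\mid x_{-i})$, i.e. integrating out the block $x_i\in\mathbb{R}^{r_i}$ of $x=(x_1,\dots,x_s)$ against its conditional distribution under $\pi$ given the other blocks. *)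

theory Defs
  imports "HOL-Analysis.Analysis"
begin

definition pos_def_mat :: "real^'n^'n \<Rightarrow> bool" where
  "pos_def_mat A \<longleftrightarrow> transpose A = A \<and> (\<forall>x. x \<noteq> 0 \<longrightarrow> x \<bullet> (A *v x) > 0)"

definition gauss_dens :: "real^'n^'n \<Rightarrow> real^'n \<Rightarrow> real" where
  "gauss_dens Sig x =
     exp (- (x \<bullet> (matrix_inv Sig *v x)) / 2) / sqrt ((2 * pi) ^ CARD('n) * det Sig)"

definition merge_block :: "'n set \<Rightarrow> ('n \<Rightarrow> real) \<Rightarrow> real^'n \<Rightarrow> real^'n" where
  "merge_block I y x = (\<chi> j. if j \<in> I then y j else x $ j)"

text \<open>Pr_I f (x) = integral of f(y_I, x_{-I}) against the conditional law of the block
  x_I given x_{-I} under pi = N(0,Sigma); this conditional law has Lebesgue density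
  (on R^{|I|}) proportional to y_I \<mapsto> gauss_dens Sig (y_I, x_{-I}).\<close>
definition Pr_block :: "real^'n^'n \<Rightarrow> 'n set \<Rightarrow> (real^'n \<Rightarrow> real) \<Rightarrow> real^'n \<Rightarrow> real" where
  "Pr_block Sig I f x =
     (\<integral>y. f (merge_block I y x) * gauss_dens Sig (merge_block I y x) \<partial>(PiM I (\<lambda>_. lborel)))
     / (\<integral>y. gauss_dens Sig (merge_block I y x) \<partial>(PiM I (\<lambda>_. lborel)))"

definition block_inv_embed :: "real^'n^'n \<Rightarrow> 'n set \<Rightarrow> real^'n^'n" where
  "block_inv_embed Q I = (THE D. (\<forall>j k. (j \<notin> I \<or> k \<notin> I) \<longrightarrow> D $ j $ k = 0) \<and>
      (\<forall>j\<in>I. \<forall>k\<in>I. (\<Sum>l\<in>I. D $ j $ l * Q $ l $ k) = (if j = k then 1 else 0)))"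

definition f_c :: "real^'n^'n \<Rightarrow> real^'n \<Rightarrow> real^'n \<Rightarrow> real" where
  "f_c K c x = exp (c \<bullet> (K *v x) - (norm c)^2 / 2)"

end

theory Submission
  imports Defs "HOL-Probability.Probability"
begin


lemma dot_transp: "(x::real^'n) \<bullet> (A *v y) = (transpose A *v x) \<bullet> y"
  by (metis dot_lmul_matrix transpose_matrix_vector)

lemma sum_if_conj1[simp]: "(\<Sum>k\<in>UNIV. if k = (a::'a::finite) \<and> P k then f k else 0) = (if P a then f a else (0::real))"
proof -
  have "(\<Sum>k\<in>UNIV. if k = a \<and> P k then f k else 0) = (\<Sum>k\<in>UNIV. if k = a then (if P k then f k else 0) else 0)"
    by (rule sum.cong) auto
  also have "\<dots> = (\<Sum>k\<in>UNIV. if k = a then (if P a then f a else 0) else 0)"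
    by (rule sum.cong) auto
  also have "\<dots> = (if P a then f a else 0)" by (subst sum.delta) auto
  finally show ?thesis .
qed

lemma sum_if_conj2[simp]: "(\<Sum>k\<in>UNIV. if (a::'a::finite) = k \<and> P k then f k else 0) = (if P a then f a else (0::real))"
  using sum_if_conj1[of a P f] by (simp add: eq_commute)

definition projI :: "'n::finite set \<Rightarrow> real^'n^'n" where
  "projI I = (\<chi> j k. if j = k \<and> j \<in> I then 1 else 0)"

lemma projI_vec: "(projI I *v v) $ j = (if j \<in> I then v$j else 0)"
  by (simp add: projI_def matrix_vector_mult_def if_distrib[of "\<lambda>t. t * _"] cong: if_cong)

lemma projI_transpose: "transpose (projI I) = projI I"
  by (auto simp: projI_def transpose_def vec_eq_iff)

lemma projI_idem: "projI I ** projI I = projI I"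
  by (simp add: projI_def matrix_matrix_mult_def vec_eq_iff if_distrib[of "\<lambda>t. t * _"] cong: if_cong)

lemma projI_left: "(projI I ** A) $ j $ k = (if j \<in> I then A$j$k else 0)"
  by (simp add: projI_def matrix_matrix_mult_def if_distrib[of "\<lambda>t. t * _"] cong: if_cong)

lemma projI_right: "(A ** projI I) $ j $ k = (if k \<in> I then A$j$k else 0)"
  by (simp add: projI_def matrix_matrix_mult_def if_distrib[of "\<lambda>t. _ * t"] cong: if_cong)

lemma projI_both: "(projI I ** A ** projI I) $ j $ k = (if j \<in> I \<and> k \<in> I then A$j$k else 0)"
  by (simp add: projI_right projI_left)

definition Mmat :: "real^'n^'n \<Rightarrow> 'n::finite set \<Rightarrow> real^'n^'n" where
  "Mmat Q I = projI I ** Q ** projI I + (mat 1 - projI I)"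

lemma Mmat_entry: "Mmat Q I $ l $ k = (if l \<in> I \<and> k \<in> I then Q$l$k else 0) + (if l = k \<and> l \<notin> I then 1 else 0)"
proof -
  have "(mat 1 - projI I) $ l $ k = (if l = k \<and> l \<notin> I then 1 else (0::real))"
    by (auto simp: mat_def projI_def)
  then show ?thesis by (simp add: Mmat_def projI_both)
qed

lemma Mmat_vec: "Mmat Q I *v x = projI I *v (Q *v (projI I *v x)) + x - projI I *v x"
  by (simp add: Mmat_def algebra_simps matrix_vector_mul_assoc matrix_mul_assoc)

lemma projI_dot: "x \<bullet> (projI I *v z) = (projI I *v x) \<bullet> z"
  using dot_transp[of x "projI I" z] by (simp add: projI_transpose)

lemma projI_vv: "projI I *v (projI I *v x) = projI I *v x"
  by (simp add: matrix_vector_mul_assoc projI_idem)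

lemma Mmat_pd:
  fixes Q :: "real^'n::finite^'n"
  assumes Qpd: "\<forall>v. v \<noteq> 0 \<longrightarrow> v \<bullet> (Q *v v) > 0" and x: "x \<noteq> 0"
  shows "x \<bullet> (Mmat Q I *v x) > 0"
proof -
  define p where "p = projI I *v x"
  have e1: "x \<bullet> (projI I *v (Q *v p)) = p \<bullet> (Q *v p)"
    by (simp add: projI_dot p_def)
  have e2: "x \<bullet> p = p \<bullet> p"
    using projI_dot[of x I p] projI_vv[of I x] by (simp add: p_def)
  have e3: "(x - p) \<bullet> (x - p) = x \<bullet> x - x \<bullet> p"
  proof -
    have "(x - p) \<bullet> (x - p) = x \<bullet> x - x \<bullet> p - p \<bullet> x + p \<bullet> p"
      by (simp add: inner_diff_left inner_diff_right)
    then show ?thesis using e2 inner_commute[of p x] by linarith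
  qed
  have "x \<bullet> (Mmat Q I *v x) = p \<bullet> (Q *v p) + (x - p) \<bullet> (x - p)"
  proof -
    have "x \<bullet> (Mmat Q I *v x) = x \<bullet> (projI I *v (Q *v p)) + x \<bullet> x - x \<bullet> p"
      by (simp add: Mmat_vec p_def[symmetric] inner_add_right inner_diff_right)
    then show ?thesis using e1 e3 by linarith
  qed
  moreover have "p \<bullet> (Q *v p) \<ge> 0"
    using Qpd by (cases "p = 0") (auto intro: less_imp_le)
  moreover have "p \<noteq> 0 \<Longrightarrow> p \<bullet> (Q *v p) > 0" using Qpd by auto
  moreover have "p = 0 \<Longrightarrow> (x - p) \<bullet> (x - p) > 0" using x by simp
  ultimately show ?thesis by (cases "p = 0") (auto intro: add_pos_nonneg)
qed

lemma Mmat_sym: "transpose Q = Q \<Longrightarrow> transpose (Mmat Q I) = Mmat Q I"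
  by (auto simp: transpose_def vec_eq_iff Mmat_entry dest: arg_cong[of _ _ "\<lambda>A. A $ _ $ _"])

lemma Mmat_inv:
  fixes Q :: "real^'n::finite^'n"
  assumes Qpd: "\<forall>v. v \<noteq> 0 \<longrightarrow> v \<bullet> (Q *v v) > 0" and Qsym: "transpose Q = Q"
  obtains B where "B ** Mmat Q I = mat 1" "Mmat Q I ** B = mat 1" "transpose B = B"
proof -
  have "\<forall>x. Mmat Q I *v x = 0 \<longrightarrow> x = 0"
    using Mmat_pd[OF Qpd] by (metis inner_zero_right less_irrefl)
  then obtain B where B: "B ** Mmat Q I = mat 1" using matrix_left_invertible_ker by blast
  then have B2: "Mmat Q I ** B = mat 1" using matrix_left_right_inverse by blast
  have "transpose B ** Mmat Q I = mat 1"
    using arg_cong[OF B2, of transpose] by (simp add: matrix_transpose_mul Mmat_sym[OF Qsym] transpose_mat)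
  then have "transpose B = B"
    by (metis B2 matrix_mul_assoc matrix_mul_lid matrix_mul_rid)
  with B B2 show ?thesis using that by blast
qed

lemma sum_UNIV_if_in: "(\<Sum>l\<in>(UNIV::'n::finite set). if l \<in> I then f l else 0) = sum f I"
  by (simp add: sum.If_cases)

lemma block_inv_embed_eq:
  fixes Q B :: "real^'n::finite^'n"
  assumes B: "B ** Mmat Q I = mat 1" "Mmat Q I ** B = mat 1"
  shows "block_inv_embed Q I = projI I ** B ** projI I"
  unfolding block_inv_embed_def
proof (rule the_equality)
  let ?D = "projI I ** B ** projI I"
  have c1: "\<forall>j k. (j \<notin> I \<or> k \<notin> I) \<longrightarrow> ?D $ j $ k = 0"
    by (auto simp: projI_both)
  have c2: "(\<Sum>l\<in>I. ?D $ j $ l * Q $ l $ k) = (if j = k then 1 else 0)" if j: "j \<in> I" and k: "k \<in> I" for j k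
  proof -
    have "(\<Sum>l\<in>I. ?D $ j $ l * Q $ l $ k) = (\<Sum>l\<in>I. B $ j $ l * Q $ l $ k)"
      using j by (intro sum.cong) (auto simp: projI_both)
    also have "\<dots> = (\<Sum>l\<in>UNIV. if l \<in> I then B $ j $ l * Q $ l $ k else 0)"
      by (simp add: sum_UNIV_if_in)
    also have "\<dots> = (B ** Mmat Q I) $ j $ k"
      unfolding matrix_matrix_mult_def using k by (auto simp: Mmat_entry intro!: sum.cong)
    also have "\<dots> = (if j = k then 1 else 0)" using B(1) by (simp add: mat_def)
    finally show ?thesis .
  qed
  show "(\<forall>j k. (j \<notin> I \<or> k \<notin> I) \<longrightarrow> ?D $ j $ k = 0) \<and>
      (\<forall>j\<in>I. \<forall>k\<in>I. (\<Sum>l\<in>I. ?D $ j $ l * Q $ l $ k) = (if j = k then 1 else 0))"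
    using c1 c2 by blast
next
  fix D :: "real^'n^'n"
  assume H: "(\<forall>j k. (j \<notin> I \<or> k \<notin> I) \<longrightarrow> D $ j $ k = 0) \<and>
      (\<forall>j\<in>I. \<forall>k\<in>I. (\<Sum>l\<in>I. D $ j $ l * Q $ l $ k) = (if j = k then 1 else 0))"
  have DM: "D ** Mmat Q I = projI I"
  proof -
    have "(D ** Mmat Q I) $ j $ k = projI I $ j $ k" for j k
    proof (cases "j \<in> I")
      case False
      then show ?thesis using H by (simp add: matrix_matrix_mult_def projI_def)
    next
      case True
      have "(D ** Mmat Q I) $ j $ k = (\<Sum>l\<in>UNIV. if l \<in> I then D $ j $ l * Mmat Q I $ l $ k else 0)"
        unfolding matrix_matrix_mult_def using H by (auto intro!: sum.cong)
      also have "\<dots> = (\<Sum>l\<in>I. D $ j $ l * Mmat Q I $ l $ k)" by (simp add: sum_UNIV_if_in)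
      also have "\<dots> = (\<Sum>l\<in>I. D $ j $ l * (if k \<in> I then Q $ l $ k else 0))"
        by (intro sum.cong) (auto simp: Mmat_entry)
      also have "\<dots> = projI I $ j $ k"
        using H True by (cases "k \<in> I") (auto simp: projI_def)
      finally show ?thesis .
    qed
    then show ?thesis by (simp add: vec_eq_iff)
  qed
  have DP: "D ** projI I = D"
    using H by (auto simp: vec_eq_iff projI_right)
  have "D = (D ** Mmat Q I) ** B" by (metis B(2) matrix_mul_assoc matrix_mul_rid)
  then have "D = projI I ** B" using DM by simp
  then show "D = projI I ** B ** projI I" using DP by metis
qed

lemma projI_Mmat: "projI I ** Mmat Q I = projI I ** Q ** projI I"
  by (auto simp: vec_eq_iff projI_left projI_both Mmat_entry)

lemma D_props:
  fixes Q B :: "real^'n::finite^'n"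
  assumes B: "B ** Mmat Q I = mat 1" "Mmat Q I ** B = mat 1" and Bsym: "transpose B = B"
  defines "D \<equiv> projI I ** B ** projI I"
  shows "transpose D = D" "D ** Q ** D = D" "projI I ** Q ** D = projI I"
    "\<And>b j. j \<notin> I \<Longrightarrow> (D *v b) $ j = 0"
proof -
  let ?P = "projI I"
  have R1: "?P ** (Q ** (?P ** Y)) = ?P ** (Mmat Q I ** Y)" for Y
    by (metis matrix_mul_assoc projI_Mmat)
  have R2: "Mmat Q I ** (B ** Y) = Y" for Y by (metis B(2) matrix_mul_assoc matrix_mul_lid)
  have R3: "B ** (Mmat Q I ** Y) = Y" for Y by (metis B(1) matrix_mul_assoc matrix_mul_lid)
  have R4: "?P ** (?P ** Y) = ?P ** Y" for Y by (metis matrix_mul_assoc projI_idem)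
  have Dr: "D = ?P ** (B ** ?P)" by (simp add: D_def matrix_mul_assoc)
  show "transpose D = D" by (simp add: D_def matrix_transpose_mul projI_transpose Bsym matrix_mul_assoc)
  show "D ** Q ** D = D"
    by (simp add: Dr matrix_mul_assoc[symmetric] R1 R2 R3 R4 projI_idem)
  show "?P ** Q ** D = ?P"
    by (simp add: Dr matrix_mul_assoc[symmetric] R1 R2 R3 R4 projI_idem)
  show "(D *v b) $ j = 0" if "j \<notin> I" for b j
    using that by (simp add: Dr matrix_vector_mul_assoc[symmetric] projI_vec)
qed

lemma key_identity:
  fixes K Q D :: "real^'n::finite^'n" and c x z :: "real^'n"
  assumes Ksym: "transpose K = K" and KK: "K ** K = Q" and Dsym: "transpose D = D"
    and DQD: "D ** Q ** D = D" and PQD: "projI I ** Q ** D = projI I"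
    and zx: "\<And>j. j \<notin> I \<Longrightarrow> z $ j = x $ j"
  shows "f_c K c z * exp (- (z \<bullet> (Q *v z)) / 2)
    = f_c K ((mat 1 - K ** D ** K) *v c) x
      * exp (- ((z - D *v (K *v c)) \<bullet> (Q *v (z - D *v (K *v c)))) / 2)"
proof -
  define b where "b = K *v c"
  define v where "v = D *v b"
  define w where "w = b - Q *v v"
  define P where "P = projI I"
  have Qsym: "transpose Q = Q" using KK Ksym by (metis matrix_transpose_mul)
  have Pw: "P *v w = 0"
    by (simp add: w_def v_def P_def matrix_vector_mult_diff_distrib matrix_vector_mul_assoc matrix_mul_assoc PQD)
  have zxP: "P *v (z - x) = z - x"
    using zx by (auto simp: vec_eq_iff P_def projI_vec)
  have wz: "w \<bullet> z = w \<bullet> x"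
  proof -
    have "w \<bullet> (z - x) = w \<bullet> (P *v (z - x))" by (simp add: zxP)
    also have "\<dots> = 0" using projI_dot[of w I "z - x"] Pw by (simp add: P_def)
    finally show ?thesis by (simp add: inner_diff_right)
  qed
  have vQz: "v \<bullet> (Q *v z) = z \<bullet> (Q *v v)"
    using dot_transp[of v Q z] Qsym by (simp add: inner_commute)
  have q: "(z - v) \<bullet> (Q *v (z - v)) = z \<bullet> (Q *v z) - 2 * (z \<bullet> (Q *v v)) + v \<bullet> (Q *v v)"
    using vQz by (simp add: matrix_vector_mult_diff_distrib inner_diff_left inner_diff_right)
  have vQv: "v \<bullet> (Q *v v) = b \<bullet> v"
  proof -
    have "v \<bullet> (Q *v v) = b \<bullet> (D *v (Q *v (D *v b)))"
      using dot_transp[of b D "Q *v (D *v b)"] Dsym by (simp add: v_def)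
    also have "\<dots> = b \<bullet> ((D ** Q ** D) *v b)" by (simp add: matrix_vector_mul_assoc matrix_mul_assoc)
    finally show ?thesis by (simp add: DQD v_def)
  qed
  have Tc: "(mat 1 - K ** D ** K) *v c = c - K *v v"
    by (simp add: matrix_vector_mult_diff_rdistrib matrix_vector_mul_assoc matrix_mul_assoc v_def b_def)
  have cK: "c \<bullet> (K *v y) = b \<bullet> y" for y
    using dot_transp[of c K y] Ksym by (simp add: b_def)
  have KTc: "K *v (c - K *v v) = w"
    by (simp add: matrix_vector_mult_diff_distrib matrix_vector_mul_assoc KK w_def b_def)
  have TcKx: "(c - K *v v) \<bullet> (K *v x) = w \<bullet> x"
    using dot_transp[of "c - K *v v" K x] Ksym KTc by (simp add: inner_commute)
  have KvKv: "(K *v v) \<bullet> (K *v v) = b \<bullet> v"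
    using dot_transp[of "K *v v" K v] Ksym vQv
    by (simp add: matrix_vector_mul_assoc KK inner_commute)
  have nTc: "(norm (c - K *v v))\<^sup>2 = c \<bullet> c - b \<bullet> v"
    using cK[of v] KvKv by (simp add: power2_norm_eq_inner inner_diff_left inner_diff_right inner_commute)
  have wx: "w \<bullet> x = b \<bullet> z - z \<bullet> (Q *v v)"
    using wz unfolding w_def by (simp add: inner_diff_left inner_diff_right inner_commute)
  have ex: "c \<bullet> (K *v z) - (norm c)\<^sup>2 / 2 + (- (z \<bullet> (Q *v z)) / 2) =
     (c - K *v v) \<bullet> (K *v x) - (norm (c - K *v v))\<^sup>2 / 2 + (- ((z - v) \<bullet> (Q *v (z - v))) / 2)"
    using cK[of z] TcKx nTc q vQv wx power2_norm_eq_inner[of c] by linarith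
  show ?thesis
    unfolding f_c_def b_def[symmetric] v_def[symmetric] Tc mult_exp_exp ex ..
qed



lemma meas_merge: "(\<lambda>y. merge_block I y x) \<in> borel_measurable (PiM I (\<lambda>_. lborel))"
proof (rule borel_measurable_euclidean_space[THEN iffD2], rule ballI)
  fix b :: "real^'a" assume "b \<in> Basis"
  then obtain i where b: "b = axis i 1" unfolding Basis_vec_def by auto
  have e: "merge_block I y x \<bullet> b = (if i \<in> I then y i else x $ i)" for y
    by (simp add: b inner_axis merge_block_def)
  show "(\<lambda>y. merge_block I y x \<bullet> b) \<in> borel_measurable (PiM I (\<lambda>_. lborel))"
    unfolding e
  proof (cases "i \<in> I")
    case True
    then show "(\<lambda>y. if i \<in> I then y i else x $ i) \<in> borel_measurable (PiM I (\<lambda>_. lborel))"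
      by simp
  qed simp
qed

lemma cont_mv: "continuous_on UNIV (\<lambda>z::real^'n::finite. (A::real^'n^'m::finite) *v z)"
  by (rule linear_continuous_on) (simp add: linear_conv_bounded_linear[symmetric] matrix_vector_mul_linear)

lemma cont_quad: "continuous_on UNIV (\<lambda>z::real^'n::finite. z \<bullet> (A *v z))"
  by (intro continuous_on_inner continuous_on_id cont_mv)

lemma meas_gauss: "gauss_dens (Sig::real^'n::finite^'n) \<in> borel_measurable borel"
proof -
  have eq: "gauss_dens Sig = (\<lambda>z. exp (- (z \<bullet> (matrix_inv Sig *v z)) / 2) * (1 / sqrt ((2 * pi) ^ CARD('n) * det Sig)))"
    by (simp add: fun_eq_iff gauss_dens_def)
  have "continuous_on UNIV (gauss_dens Sig)"
    unfolding eq
    by (intro continuous_on_mult continuous_on_divide continuous_on_exp continuous_on_minus continuous_on_const cont_quad) simp_all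
  then show ?thesis by (rule borel_measurable_continuous_onI)
qed

lemma meas_fc: "f_c K c \<in> borel_measurable borel"
proof -
  have "continuous_on UNIV (f_c K c)"
    unfolding f_c_def
    by (intro continuous_on_exp continuous_on_diff continuous_on_inner continuous_on_const cont_mv)
  then show ?thesis by (rule borel_measurable_continuous_onI)
qed

lemma psf_lborel: "product_sigma_finite (\<lambda>_::'i. lborel)"
  unfolding product_sigma_finite_def by (simp add: sigma_finite_lborel)

lemma lborel_shift_emeasure:
  assumes A: "A \<in> sets lborel"
  shows "((+) (c::real)) -` A \<in> sets lborel" "emeasure lborel (((+) c) -` A) = emeasure lborel A"
proof -
  have m: "((+) c) \<in> measurable lborel borel" by simp
  show "((+) (c::real)) -` A \<in> sets lborel"
    using measurable_sets[OF m, of A] A by simp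
  have "emeasure (distr lborel borel ((+) c)) A = emeasure lborel A"
    by (simp add: lborel_distr_plus)
  then show "emeasure lborel (((+) c) -` A) = emeasure lborel A"
    using A by (simp add: emeasure_distr)
qed

lemma PiM_shift:
  fixes I :: "'n::finite set" and u :: "'n \<Rightarrow> real"
  shows "distr (PiM I (\<lambda>_. lborel)) (PiM I (\<lambda>_. lborel)) (\<lambda>y. \<lambda>j\<in>I. u j + y j) = PiM I (\<lambda>_. lborel)"
proof -
  interpret product_sigma_finite "\<lambda>_::'n. lborel" by (rule psf_lborel)
  have meas: "(\<lambda>y. \<lambda>j\<in>I. u j + y j) \<in> measurable (PiM I (\<lambda>_. lborel)) (PiM I (\<lambda>_. lborel))"
    by (intro measurable_restrict) simp
  show ?thesis
  proof (rule PiM_eqI)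
    show "finite I" by simp
    show "sets (distr (PiM I (\<lambda>_. lborel)) (PiM I (\<lambda>_. lborel)) (\<lambda>y. \<lambda>j\<in>I. u j + y j)) = sets (PiM I (\<lambda>_. lborel))"
      by simp
    fix A :: "'n \<Rightarrow> real set" assume A: "\<And>i. i \<in> I \<Longrightarrow> A i \<in> sets lborel"
    have pre: "(\<lambda>y. \<lambda>j\<in>I. u j + y j) -` PiE I A \<inter> space (PiM I (\<lambda>_. lborel)) = PiE I (\<lambda>j. ((+) (u j)) -` A j)"
      by (auto simp: space_PiM PiE_iff extensional_def)
    have "emeasure (distr (PiM I (\<lambda>_. lborel)) (PiM I (\<lambda>_. lborel)) (\<lambda>y. \<lambda>j\<in>I. u j + y j)) (PiE I A)
        = emeasure (PiM I (\<lambda>_. lborel)) (PiE I (\<lambda>j. ((+) (u j)) -` A j))"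
      using A by (subst emeasure_distr[OF meas]) (auto simp: pre intro!: sets_PiM_I_finite)
    also have "\<dots> = (\<Prod>j\<in>I. emeasure lborel (((+) (u j)) -` A j))"
      using A lborel_shift_emeasure(1) by (subst emeasure_PiM) auto
    also have "\<dots> = (\<Prod>j\<in>I. emeasure lborel (A j))"
      using A lborel_shift_emeasure(2) by (intro prod.cong) auto
    finally show "emeasure (distr (PiM I (\<lambda>_. lborel)) (PiM I (\<lambda>_. lborel)) (\<lambda>y. \<lambda>j\<in>I. u j + y j)) (PiE I A)
        = (\<Prod>j\<in>I. emeasure lborel (A j))" .
  qed
qed

lemma quad_lower:
  fixes Q :: "real^'n::finite^'n"
  assumes Qpd: "\<forall>v. v \<noteq> 0 \<longrightarrow> v \<bullet> (Q *v v) > 0"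
  obtains l where "l > 0" "\<And>v. l * (v \<bullet> v) \<le> v \<bullet> (Q *v v)"
proof -
  let ?S = "sphere (0::real^'n) 1"
  have ne: "?S \<noteq> {}" by simp
  obtain m where m: "m \<in> ?S" "\<And>y. y \<in> ?S \<Longrightarrow> m \<bullet> (Q *v m) \<le> y \<bullet> (Q *v y)"
    using continuous_attains_inf[OF compact_sphere ne continuous_on_subset[OF cont_quad[of Q]]] by auto
  have m0: "m \<noteq> 0" using m(1) by auto
  have lpos: "m \<bullet> (Q *v m) > 0" using Qpd m0 by auto
  have "m \<bullet> (Q *v m) * (v \<bullet> v) \<le> v \<bullet> (Q *v v)" for v
  proof (cases "v = 0")
    case True then show ?thesis by simp
  next
    case False
    define w where "w = (1 / norm v) *\<^sub>R v"
    have w: "w \<in> ?S" using False by (simp add: w_def)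
    have v: "v = norm v *\<^sub>R w" using False by (simp add: w_def)
    have "v \<bullet> (Q *v v) = (norm v)\<^sup>2 * (w \<bullet> (Q *v w))"
      by (subst (1 2) v) (simp add: matrix_vector_mult_scaleR power2_eq_square)
    moreover have "v \<bullet> v = (norm v)\<^sup>2" by (simp add: power2_norm_eq_inner)
    ultimately show ?thesis using m(2)[OF w]
      by (metis mult.commute mult_right_mono zero_le_power2)
  qed
  then show ?thesis using that lpos by blast
qed

lemma integrable_exp_sq:
  assumes a: "a > 0"
  shows "integrable lborel (\<lambda>t::real. exp (- a * t\<^sup>2))"
proof -
  define s where "s = sqrt (1 / (2 * a))"
  have s: "s > 0" "s\<^sup>2 = 1 / (2 * a)" using a by (auto simp: s_def)
  have "(\<lambda>t::real. exp (- a * t\<^sup>2)) = (\<lambda>t. sqrt (2 * pi * s\<^sup>2) * normal_density 0 s t)"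
    using s a by (auto simp: fun_eq_iff normal_density_def field_simps)
  then show ?thesis using s(1) by (simp add: integrable_normal_density)
qed

lemma meas_G:
  fixes Q :: "real^'n::finite^'n"
  shows "(\<lambda>y. exp (- (merge_block I y x \<bullet> (Q *v merge_block I y x)) / 2)) \<in> borel_measurable (PiM I (\<lambda>_. lborel))"
proof -
  have "(\<lambda>z::real^'n. exp (- (z \<bullet> (Q *v z)) / 2)) \<in> borel_measurable borel"
    by (intro borel_measurable_continuous_onI continuous_on_exp continuous_on_divide continuous_on_minus continuous_on_const cont_quad) simp
  from measurable_compose[OF meas_merge this] show ?thesis .
qed

lemma integrable_G:
  fixes Q :: "real^'n::finite^'n"
  assumes Qpd: "\<forall>v. v \<noteq> 0 \<longrightarrow> v \<bullet> (Q *v v) > 0"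
  shows "integrable (PiM I (\<lambda>_. lborel)) (\<lambda>y. exp (- (merge_block I y x \<bullet> (Q *v merge_block I y x)) / 2))"
proof -
  interpret product_sigma_finite "\<lambda>_::'n. lborel" by (rule psf_lborel)
  obtain l where l: "l > 0" "\<And>v. l * (v \<bullet> v) \<le> v \<bullet> (Q *v v)" using quad_lower[OF Qpd] by blast
  have int: "integrable (PiM I (\<lambda>_. lborel)) (\<lambda>y. \<Prod>j\<in>I. exp (- (l/2) * (y j)\<^sup>2))"
    using l(1) by (intro product_integrable_prod integrable_exp_sq) auto
  show ?thesis
  proof (rule Bochner_Integration.integrable_bound[OF int meas_G], rule AE_I2)
    fix y :: "'n \<Rightarrow> real"
    let ?z = "merge_block I y x"
    have s1: "(\<Sum>j\<in>I. (y j)\<^sup>2) = (\<Sum>j\<in>I. ?z $ j * ?z $ j)"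
      by (intro sum.cong) (auto simp: merge_block_def power2_eq_square)
    also have "\<dots> \<le> (\<Sum>j\<in>UNIV. ?z $ j * ?z $ j)"
      by (intro sum_mono2) auto
    also have "\<dots> = ?z \<bullet> ?z" by (simp add: inner_vec_def)
    finally have s: "(\<Sum>j\<in>I. (y j)\<^sup>2) \<le> ?z \<bullet> ?z" .
    have "exp (- (?z \<bullet> (Q *v ?z)) / 2) \<le> exp (- (l/2) * (\<Sum>j\<in>I. (y j)\<^sup>2))"
    proof -
      have "l * (\<Sum>j\<in>I. (y j)\<^sup>2) \<le> ?z \<bullet> (Q *v ?z)"
        using l(2)[of ?z] mult_left_mono[OF s, of l] l(1) by linarith
      then show ?thesis by simp
    qed
    also have "\<dots> = (\<Prod>j\<in>I. exp (- (l/2) * (y j)\<^sup>2))"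
      by (simp add: sum_distrib_left exp_sum)
    finally show "norm (exp (- (?z \<bullet> (Q *v ?z)) / 2)) \<le> norm (\<Prod>j\<in>I. exp (- (l/2) * (y j)\<^sup>2))"
      by (simp add: prod_nonneg abs_of_nonneg)
  qed
qed

lemma integral_G_pos:
  fixes Q :: "real^'n::finite^'n"
  assumes Qpd: "\<forall>v. v \<noteq> 0 \<longrightarrow> v \<bullet> (Q *v v) > 0"
  shows "(\<integral>y. exp (- (merge_block I y x \<bullet> (Q *v merge_block I y x)) / 2) \<partial>(PiM I (\<lambda>_. lborel))) > 0"
proof -
  interpret product_sigma_finite "\<lambda>_::'n. lborel" by (rule psf_lborel)
  let ?G = "\<lambda>y. exp (- (merge_block I y x \<bullet> (Q *v merge_block I y x)) / 2)"
  have ge: "integral\<^sup>L (PiM I (\<lambda>_. lborel)) ?G \<ge> 0" by (intro integral_nonneg_AE) auto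
  have "integral\<^sup>L (PiM I (\<lambda>_. lborel)) ?G \<noteq> 0"
  proof
    assume "integral\<^sup>L (PiM I (\<lambda>_. lborel)) ?G = 0"
    then have "AE y in PiM I (\<lambda>_. lborel). ?G y = 0"
      using integral_nonneg_eq_0_iff_AE[OF integrable_G[OF Qpd]] by auto
    then have aeF: "AE y in PiM I (\<lambda>_::'n. lborel::real measure). False" by simp
    have e0: "emeasure (PiM I (\<lambda>_::'n. lborel::real measure)) (space (PiM I (\<lambda>_. lborel))) = 0"
      using AE_E2[OF aeF] by simp
    have "emeasure (PiM I (\<lambda>_::'n. lborel)) (PiE I (\<lambda>_. {0..1::real})) = (\<Prod>j\<in>I. emeasure lborel {0..1::real})"
      by (subst emeasure_PiM) auto
    also have "\<dots> = 1" by simp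
    finally have e1: "emeasure (PiM I (\<lambda>_::'n. lborel)) (PiE I (\<lambda>_. {0..1::real})) = 1" .
    have "emeasure (PiM I (\<lambda>_::'n. lborel)) (PiE I (\<lambda>_. {0..1::real})) \<le> emeasure (PiM I (\<lambda>_::'n. lborel)) (space (PiM I (\<lambda>_::'n. lborel::real measure)))"
      by (rule emeasure_space)
    with e0 e1 show False by simp
  qed
  with ge show ?thesis by linarith
qed



theorem lemma3:
  fixes Sig K :: "real^'n^'n"
    and s :: nat and blocks :: "nat \<Rightarrow> 'n set"
    and i :: nat and c x :: "real^'n"
  assumes Sig_pd: "pos_def_mat Sig"
    and K_sym: "transpose K = K"
    and K_pd: "pos_def_mat K"
    and K_sqrt: "K ** K = matrix_inv Sig"
    and blocks_nonempty: "\<forall>j\<in>{1..s}. blocks j \<noteq> {}"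
    and blocks_disjoint: "\<forall>j\<in>{1..s}. \<forall>k\<in>{1..s}. j \<noteq> k \<longrightarrow> blocks j \<inter> blocks k = {}"
    and blocks_cover: "(\<Union>j\<in>{1..s}. blocks j) = UNIV"
    and i_block: "i \<in> {1..s}"
  shows "Pr_block Sig (blocks i) (f_c K c) x
         = f_c K ((mat 1 - K ** block_inv_embed (matrix_inv Sig) (blocks i) ** K) *v c) x"
proof -
  define I where "I = blocks i"
  define Q where "Q = K ** K"
  have Qdef: "matrix_inv Sig = Q" using K_sqrt by (simp add: Q_def)
  have Kpd: "\<forall>v. v \<noteq> 0 \<longrightarrow> v \<bullet> (K *v v) > 0" using K_pd by (simp add: pos_def_mat_def)
  have Qsym: "transpose Q = Q" unfolding Q_def using K_sym by (simp add: matrix_transpose_mul)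
  have Qpd: "\<forall>v. v \<noteq> 0 \<longrightarrow> v \<bullet> (Q *v v) > 0"
  proof (intro allI impI)
    fix v :: "real^'n" assume v: "v \<noteq> 0"
    have "K *v v \<noteq> 0" using Kpd v by (metis inner_zero_right less_irrefl)
    moreover have "v \<bullet> (Q *v v) = (K *v v) \<bullet> (K *v v)"
      using dot_transp[of v K "K *v v"] K_sym by (simp add: Q_def matrix_vector_mul_assoc)
    ultimately show "v \<bullet> (Q *v v) > 0" by simp
  qed
  obtain B where B: "B ** Mmat Q I = mat 1" "Mmat Q I ** B = mat 1" "transpose B = B"
    using Mmat_inv[OF Qpd Qsym] by blast
  define D where "D = projI I ** B ** projI I"
  have Deq: "block_inv_embed Q I = D" unfolding D_def by (rule block_inv_embed_eq[OF B(1,2)])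
  note DP = D_props[OF B, folded D_def]
  define C where "C = sqrt ((2 * pi) ^ CARD('n) * det Sig)"
  have "\<forall>v. Sig *v v = 0 \<longrightarrow> v = 0"
    using Sig_pd unfolding pos_def_mat_def by (metis inner_zero_right less_irrefl)
  then have "invertible Sig"
    using matrix_left_invertible_ker invertible_left_inverse by blast
  then have "det Sig \<noteq> 0" by (simp add: invertible_det_nz)
  then have C0: "C \<noteq> 0" by (simp add: C_def)
  have gd: "gauss_dens Sig z = exp (- (z \<bullet> (Q *v z)) / 2) / C" for z
    by (simp add: gauss_dens_def C_def Qdef)
  define b where "b = K *v c"
  define u where "u j = - ((D *v b) $ j)" for j
  define T where "T = (\<lambda>y. \<lambda>j\<in>I. u j + y j)"
  define F where "F = f_c K ((mat 1 - K ** D ** K) *v c) x"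
  define M where "M = PiM I (\<lambda>_::'n. lborel::real measure)"
  have key: "f_c K c (merge_block I y x) * gauss_dens Sig (merge_block I y x)
      = F * gauss_dens Sig (merge_block I (T y) x)" for y
  proof -
    have zx: "\<And>j. j \<notin> I \<Longrightarrow> merge_block I y x $ j = x $ j" by (simp add: merge_block_def)
    have sh: "merge_block I y x - D *v (K *v c) = merge_block I (T y) x"
      using DP(4) by (auto simp: vec_eq_iff merge_block_def T_def u_def b_def)
    from key_identity[OF K_sym Q_def[symmetric] DP(1) DP(2) DP(3) zx, of c]
    show ?thesis unfolding gd F_def sh
      by (metis times_divide_eq_right)
  qed
  have measT: "T \<in> measurable M M" unfolding T_def M_def
    by (intro measurable_restrict) simp
  have measg: "(\<lambda>y. gauss_dens Sig (merge_block I y x)) \<in> borel_measurable M"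
    unfolding M_def using measurable_compose[OF meas_merge meas_gauss] .
  have shiftint: "(\<integral>y. gauss_dens Sig (merge_block I (T y) x) \<partial>M) = (\<integral>y. gauss_dens Sig (merge_block I y x) \<partial>M)"
  proof -
    have "(\<integral>y. gauss_dens Sig (merge_block I (T y) x) \<partial>M) = integral\<^sup>L (distr M M T) (\<lambda>y. gauss_dens Sig (merge_block I y x))"
      by (rule integral_distr[OF measT measg, symmetric])
    also have "distr M M T = M" unfolding M_def T_def by (rule PiM_shift)
    finally show ?thesis .
  qed
  have num: "(\<integral>y. f_c K c (merge_block I y x) * gauss_dens Sig (merge_block I y x) \<partial>M)
      = F * (\<integral>y. gauss_dens Sig (merge_block I y x) \<partial>M)"
    by (simp add: key shiftint)
  have den: "(\<integral>y. gauss_dens Sig (merge_block I y x) \<partial>M)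
      = (\<integral>y. exp (- (merge_block I y x \<bullet> (Q *v merge_block I y x)) / 2) \<partial>M) / C"
    by (simp add: gd)
  have "(\<integral>y. exp (- (merge_block I y x \<bullet> (Q *v merge_block I y x)) / 2) \<partial>M) > 0"
    unfolding M_def by (rule integral_G_pos[OF Qpd])
  then have den0: "(\<integral>y. gauss_dens Sig (merge_block I y x) \<partial>M) \<noteq> 0"
    using C0 by (simp add: den)
  have "Pr_block Sig I (f_c K c) x = F"
    unfolding Pr_block_def M_def[symmetric] num using den0 by simp
  then show ?thesis by (simp add: I_def[symmetric] Qdef Deq F_def)
qed

end
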